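(* Every (fork, co-dart)-free graph $G$ satisfies $\chi(G)\le\binom{\omega(G)+1}{2}$.
   Context: All graphs are finite and simple; $\chi$ is chromatic number, $\omega$ clique number. The fork is obtained from $K_{1,3}$ by subdividing one edge once. The co-dart is the disjoint union of a paw (a triangle with a pendant vertex) and an isolated vertex. $G$ is $(H_1,H_2)$-free if it has no induced subgraph isomorphic to $H_1$ or $H_2$. *)

theory Defs
  imports Main
begin

text \<open>A finite simple graph: finite vertex set V, symmetric irreflexive adjacency E
  (only its restriction to V matters).\<close>
definition simple_graph :: "'a set \<Rightarrow> ('a \<Rightarrow> 'a \<Rightarrow> bool) \<Rightarrow> bool" where
  "simple_graph V E \<longleftrightarrow> finite V \<and> (\<forall>x\<in>V. \<forall>y\<in>V. E x y \<longleftrightarrow> E y x) \<and> (\<forall>x\<in>V. \<not> E x x)"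

definition has_induced :: "'a set \<Rightarrow> ('a \<Rightarrow> 'a \<Rightarrow> bool) \<Rightarrow> nat \<Rightarrow> (nat \<Rightarrow> nat \<Rightarrow> bool) \<Rightarrow> bool" where
  "has_induced V E k HE \<longleftrightarrow>
     (\<exists>f. inj_on f {0..<k} \<and> f ` {0..<k} \<subseteq> V \<and>
          (\<forall>i<k. \<forall>j<k. E (f i) (f j) \<longleftrightarrow> HE i j))"

text \<open>Fork: K_{1,3} with centre 0 and leaves 1,2,4, where the edge 0-4 is subdivided
  by vertex 3; edges 0-1, 0-2, 0-3, 3-4.\<close>
definition fork_adj :: "nat \<Rightarrow> nat \<Rightarrow> bool" where
  "fork_adj i j \<longleftrightarrow> {i, j} \<in> {{0,1}, {0,2}, {0,3}, {3,4}}"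

text \<open>Co-dart: paw (triangle 0,1,2 with pendant 3 attached to 0) plus isolated vertex 4.\<close>
definition codart_adj :: "nat \<Rightarrow> nat \<Rightarrow> bool" where
  "codart_adj i j \<longleftrightarrow> {i, j} \<in> {{0,1}, {0,2}, {1,2}, {0,3}}"

definition proper_colouring :: "'a set \<Rightarrow> ('a \<Rightarrow> 'a \<Rightarrow> bool) \<Rightarrow> nat \<Rightarrow> ('a \<Rightarrow> nat) \<Rightarrow> bool" where
  "proper_colouring V E k c \<longleftrightarrow> c ` V \<subseteq> {..<k} \<and> (\<forall>x\<in>V. \<forall>y\<in>V. E x y \<longrightarrow> c x \<noteq> c y)"

definition chromatic_number :: "'a set \<Rightarrow> ('a \<Rightarrow> 'a \<Rightarrow> bool) \<Rightarrow> nat" where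
  "chromatic_number V E = (LEAST k. \<exists>c. proper_colouring V E k c)"

definition is_clique :: "'a set \<Rightarrow> ('a \<Rightarrow> 'a \<Rightarrow> bool) \<Rightarrow> 'a set \<Rightarrow> bool" where
  "is_clique V E K \<longleftrightarrow> K \<subseteq> V \<and> (\<forall>x\<in>K. \<forall>y\<in>K. x \<noteq> y \<longrightarrow> E x y)"

definition clique_number :: "'a set \<Rightarrow> ('a \<Rightarrow> 'a \<Rightarrow> bool) \<Rightarrow> nat" where
  "clique_number V E = Max (card ` {K. is_clique V E K})"

end

theory Submission
  imports Defs
begin

definition col :: "'a set \<Rightarrow> ('a \<Rightarrow> 'a \<Rightarrow> bool) \<Rightarrow> nat \<Rightarrow> bool" where
  "col W E k \<longleftrightarrow> (\<exists>c. proper_colouring W E k c)"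

definition sg :: "'a set \<Rightarrow> ('a \<Rightarrow> 'a \<Rightarrow> bool) \<Rightarrow> bool" where
  "sg W E \<longleftrightarrow> (\<forall>x\<in>W. \<forall>y\<in>W. E x y \<longrightarrow> E y x) \<and> (\<forall>x\<in>W. \<not> E x x)"

definition clb :: "'a set \<Rightarrow> ('a \<Rightarrow> 'a \<Rightarrow> bool) \<Rightarrow> nat \<Rightarrow> bool" where
  "clb W E k \<longleftrightarrow> (\<forall>K. K \<subseteq> W \<longrightarrow> (\<forall>x\<in>K. \<forall>y\<in>K. x \<noteq> y \<longrightarrow> E x y) \<longrightarrow> card K \<le> k)"

definition forkfree :: "'a set \<Rightarrow> ('a \<Rightarrow> 'a \<Rightarrow> bool) \<Rightarrow> bool" where
  "forkfree W E \<longleftrightarrow> (\<forall>x0\<in>W. \<forall>x1\<in>W. \<forall>x2\<in>W. \<forall>x3\<in>W. \<forall>x4\<in>W.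
     distinct [x0,x1,x2,x3,x4] \<and> E x0 x1 \<and> E x0 x2 \<and> E x0 x3 \<and> E x3 x4 \<longrightarrow>
     E x1 x2 \<or> E x1 x3 \<or> E x1 x4 \<or> E x2 x3 \<or> E x2 x4 \<or> E x0 x4)"

definition pawfree :: "'a set \<Rightarrow> ('a \<Rightarrow> 'a \<Rightarrow> bool) \<Rightarrow> bool" where
  "pawfree W E \<longleftrightarrow> (\<forall>a\<in>W. \<forall>b\<in>W. \<forall>c\<in>W. \<forall>d\<in>W.
     E a b \<and> E a c \<and> E a d \<and> E b c \<longrightarrow> E b d \<or> E c d)"

lemma sg_sub: "sg W E \<Longrightarrow> U \<subseteq> W \<Longrightarrow> sg U E"
  unfolding sg_def by (meson subsetD)
lemma forkfree_sub: assumes "forkfree W E" "U \<subseteq> W" shows "forkfree U E"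
  unfolding forkfree_def
proof (intro ballI impI)
  fix x0 x1 x2 x3 x4 assume m: "x0 \<in> U" "x1 \<in> U" "x2 \<in> U" "x3 \<in> U" "x4 \<in> U"
    and p: "distinct [x0,x1,x2,x3,x4] \<and> E x0 x1 \<and> E x0 x2 \<and> E x0 x3 \<and> E x3 x4"
  have m': "x0 \<in> W" "x1 \<in> W" "x2 \<in> W" "x3 \<in> W" "x4 \<in> W" using m assms(2) by auto
  show "E x1 x2 \<or> E x1 x3 \<or> E x1 x4 \<or> E x2 x3 \<or> E x2 x4 \<or> E x0 x4"
    by (rule assms(1)[unfolded forkfree_def, rule_format, OF m' p])
qed
lemma pawfree_sub: assumes "pawfree W E" "U \<subseteq> W" shows "pawfree U E"
  unfolding pawfree_def
proof (intro ballI impI)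
  fix a b c d assume m: "a \<in> U" "b \<in> U" "c \<in> U" "d \<in> U"
    and p: "E a b \<and> E a c \<and> E a d \<and> E b c"
  have m': "a \<in> W" "b \<in> W" "c \<in> W" "d \<in> W" using m assms(2) by auto
  show "E b d \<or> E c d"
    by (rule assms(1)[unfolded pawfree_def, rule_format, OF m' p])
qed
lemma clb_sub: "clb W E k \<Longrightarrow> U \<subseteq> W \<Longrightarrow> clb U E k"
  unfolding clb_def by (meson order_trans)

lemma col_empty: "col {} E k"
proof -
  have "proper_colouring {} E k (\<lambda>_. 0)" unfolding proper_colouring_def by auto
  then show ?thesis unfolding col_def by blast
qed

lemma col_mono: assumes "col W E k" "k \<le> k'" shows "col W E k'"
proof -
  obtain c where c: "c ` W \<subseteq> {..<k}" "\<forall>x\<in>W. \<forall>y\<in>W. E x y \<longrightarrow> c x \<noteq> c y"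
    using assms(1) unfolding col_def proper_colouring_def by blast
  have "c ` W \<subseteq> {..<k'}" using c(1) assms(2) by auto
  then show ?thesis using c(2) unfolding col_def proper_colouring_def by blast
qed

lemma col_sub: assumes "col W E k" "U \<subseteq> W" shows "col U E k"
proof -
  obtain c where c: "c ` W \<subseteq> {..<k}" "\<forall>x\<in>W. \<forall>y\<in>W. E x y \<longrightarrow> c x \<noteq> c y"
    using assms(1) unfolding col_def proper_colouring_def by blast
  have "c ` U \<subseteq> {..<k}" using c(1) assms(2) by auto
  moreover have "\<forall>x\<in>U. \<forall>y\<in>U. E x y \<longrightarrow> c x \<noteq> c y" using c(2) assms(2) by auto
  ultimately show ?thesis unfolding col_def proper_colouring_def by blast
qed

lemma col_indep: assumes "\<forall>x\<in>W. \<forall>y\<in>W. \<not> E x y" "0 < k" shows "col W E k"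
proof -
  have "proper_colouring W E k (\<lambda>_. 0)" using assms unfolding proper_colouring_def by auto
  then show ?thesis unfolding col_def by blast
qed

lemma col_sum: assumes "col A E k1" "col B E k2" shows "col (A \<union> B) E (k1 + k2)"
proof -
  obtain c1 where c1: "proper_colouring A E k1 c1" using assms(1) col_def by blast
  obtain c2 where c2: "proper_colouring B E k2 c2" using assms(2) col_def by blast
  define c where "c x = (if x \<in> A then c1 x else k1 + c2 x)" for x
  have "proper_colouring (A \<union> B) E (k1 + k2) c"
    unfolding proper_colouring_def
  proof (intro conjI ballI impI)
    show "c ` (A \<union> B) \<subseteq> {..<k1 + k2}"
      using c1 c2 unfolding proper_colouring_def c_def by (auto simp: image_subset_iff)
  next
    fix x y assume xy: "x \<in> A \<union> B" "y \<in> A \<union> B" "E x y"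
    show "c x \<noteq> c y"
    proof (cases "x \<in> A")
      case True
      then show ?thesis
        using c1 c2 xy unfolding proper_colouring_def c_def by (cases "y \<in> A") (auto simp: image_subset_iff)
    next
      case False
      then show ?thesis
        using c1 c2 xy unfolding proper_colouring_def c_def by (cases "y \<in> A") (auto simp: image_subset_iff)
    qed
  qed
  then show ?thesis unfolding col_def by blast
qed

lemma col_sep: assumes "col A E k" "col B E k" "\<forall>x\<in>A. \<forall>y\<in>B. \<not> E x y \<and> \<not> E y x"
  shows "col (A \<union> B) E k"
proof -
  obtain c1 where c1: "proper_colouring A E k c1" using assms(1) col_def by blast
  obtain c2 where c2: "proper_colouring B E k c2" using assms(2) col_def by blast
  define c where "c x = (if x \<in> A then c1 x else c2 x)" for x
  have "proper_colouring (A \<union> B) E k c"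
    using c1 c2 assms(3) unfolding proper_colouring_def c_def by (auto simp: image_subset_iff)
  then show ?thesis unfolding col_def by blast
qed

lemma col_extend:
  assumes "finite W" "sg W E" "u \<in> W" "card {y\<in>W. E u y} < k" "col (W - {u}) E k"
  shows "col W E k"
proof -
  obtain c where c: "proper_colouring (W - {u}) E k c" using assms(5) col_def by blast
  let ?N = "{y\<in>W. E u y}"
  have "card (c ` ?N) < card {..<k}" using card_image_le[of ?N c] assms(1,4) by simp
  then have "\<not> {..<k} \<subseteq> c ` ?N" using card_mono[of "c ` ?N" "{..<k}"] assms(1) by fastforce
  then obtain m where m: "m < k" "m \<notin> c ` ?N" by auto
  have "proper_colouring W E k (c(u := m))"
    unfolding proper_colouring_def
  proof (intro conjI ballI impI)
    show "(c(u := m)) ` W \<subseteq> {..<k}"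
      using c m unfolding proper_colouring_def by (auto simp: image_subset_iff)
  next
    fix x y assume xy: "x \<in> W" "y \<in> W" "E x y"
    have sym: "E y x" using xy assms(2) unfolding sg_def by blast
    have ne: "x \<noteq> y" using xy assms(2) unfolding sg_def by blast
    show "(c(u := m)) x \<noteq> (c(u := m)) y"
    proof (cases "x = u")
      case True
      then have "y \<in> ?N" using xy ne by auto
      then show ?thesis using True ne m by auto
    next
      case False
      show ?thesis
      proof (cases "y = u")
        case True
        then have "x \<in> ?N" using xy ne sym by auto
        then show ?thesis using True False m by auto
      next
        case False2: False
        then show ?thesis using False c xy unfolding proper_colouring_def by auto
      qed
    qed
  qed
  then show ?thesis unfolding col_def by blast
qed

lemma five_cases: "(i::nat) < 5 \<Longrightarrow> i = 0 \<or> i = 1 \<or> i = 2 \<or> i = 3 \<or> i = 4"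
  by auto

lemma fork_conv: assumes "sg V E" "\<not> has_induced V E 5 fork_adj" shows "forkfree V E"
  unfolding forkfree_def
proof (intro ballI impI)
  fix x0 x1 x2 x3 x4 assume m: "x0 \<in> V" "x1 \<in> V" "x2 \<in> V" "x3 \<in> V" "x4 \<in> V"
    and p: "distinct [x0,x1,x2,x3,x4] \<and> E x0 x1 \<and> E x0 x2 \<and> E x0 x3 \<and> E x3 x4"
  show "E x1 x2 \<or> E x1 x3 \<or> E x1 x4 \<or> E x2 x3 \<or> E x2 x4 \<or> E x0 x4"
  proof (rule ccontr)
    assume n: "\<not> ?thesis"
    have sy: "\<And>x y. x \<in> V \<Longrightarrow> y \<in> V \<Longrightarrow> E x y = E y x" using assms(1) unfolding sg_def by blast
    have ir: "\<And>x. x \<in> V \<Longrightarrow> \<not> E x x" using assms(1) unfolding sg_def by blast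
    define xs where "xs = [x0,x1,x2,x3,x4]"
    have "inj_on (nth xs) {0..<5}" using p unfolding xs_def by (intro inj_on_nth) auto
    moreover have "nth xs ` {0..<5} \<subseteq> V" using m unfolding xs_def
      by (auto dest!: five_cases)
    moreover have "\<forall>i<5. \<forall>j<5. E (xs ! i) (xs ! j) \<longleftrightarrow> fork_adj i j"
    proof (intro allI impI)
      fix i j :: nat assume ij: "i < 5" "j < 5"
      show "E (xs ! i) (xs ! j) \<longleftrightarrow> fork_adj i j"
      proof -
        have f: "E x1 x0" "E x2 x0" "E x3 x0" "E x4 x3" "\<not>E x2 x1" "\<not>E x3 x1" "\<not>E x4 x1"
          "\<not>E x3 x2" "\<not>E x4 x2" "\<not>E x4 x0" "\<not>E x0 x0" "\<not>E x1 x1" "\<not>E x2 x2" "\<not>E x3 x3" "\<not>E x4 x4"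
          using p n m sy ir by blast+
        show ?thesis
        using five_cases[OF ij(1)] five_cases[OF ij(2)] p n f
        unfolding xs_def fork_adj_def
        by (elim disjE) (simp_all add: doubleton_eq_iff)
      qed
    qed
    ultimately have "has_induced V E 5 fork_adj" unfolding has_induced_def by blast
    then show False using assms(2) by blast
  qed
qed

definition nonnb :: "'a set \<Rightarrow> ('a \<Rightarrow> 'a \<Rightarrow> bool) \<Rightarrow> 'a \<Rightarrow> 'a set" where
  "nonnb V E v = {x\<in>V. x \<noteq> v \<and> \<not> E v x}"

lemma codart_conv: assumes "sg V E" "\<not> has_induced V E 5 codart_adj" "v \<in> V"
  shows "pawfree (nonnb V E v) E"
  unfolding pawfree_def
proof (intro ballI impI)
  fix a b c d assume m: "a \<in> nonnb V E v" "b \<in> nonnb V E v" "c \<in> nonnb V E v" "d \<in> nonnb V E v"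
    and p: "E a b \<and> E a c \<and> E a d \<and> E b c"
  show "E b d \<or> E c d"
  proof (rule ccontr)
    assume n: "\<not> ?thesis"
    have mV: "a \<in> V" "b \<in> V" "c \<in> V" "d \<in> V" "a \<noteq> v" "b \<noteq> v" "c \<noteq> v" "d \<noteq> v"
       "\<not> E v a" "\<not> E v b" "\<not> E v c" "\<not> E v d"
      using m unfolding nonnb_def by auto
    have sy: "\<And>x y. x \<in> V \<Longrightarrow> y \<in> V \<Longrightarrow> E x y = E y x" using assms(1) unfolding sg_def by blast
    have ir: "\<And>x. x \<in> V \<Longrightarrow> \<not> E x x" using assms(1) unfolding sg_def by blast
    define xs where "xs = [a,b,c,d,v]"
    have "distinct xs" unfolding xs_def using p n mV ir sy by auto
    then have "inj_on (nth xs) {0..<5}" unfolding xs_def by (intro inj_on_nth) auto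
    moreover have "nth xs ` {0..<5} \<subseteq> V" using mV assms(3) unfolding xs_def
      by (auto dest!: five_cases)
    moreover have "\<forall>i<5. \<forall>j<5. E (xs ! i) (xs ! j) \<longleftrightarrow> codart_adj i j"
    proof (intro allI impI)
      fix i j :: nat assume ij: "i < 5" "j < 5"
      show "E (xs ! i) (xs ! j) \<longleftrightarrow> codart_adj i j"
      proof -
        have f: "E b a" "E c a" "E d a" "E c b" "\<not>E d b" "\<not>E d c"
          "\<not>E a v" "\<not>E b v" "\<not>E c v" "\<not>E d v"
          "\<not>E a a" "\<not>E b b" "\<not>E c c" "\<not>E d d" "\<not>E v v"
          using p n mV assms(3) sy ir by blast+
        show ?thesis
        using five_cases[OF ij(1)] five_cases[OF ij(2)] p n f mV
        unfolding xs_def codart_adj_def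
        by (elim disjE) (simp_all add: doubleton_eq_iff)
      qed
    qed
    ultimately have "has_induced V E 5 codart_adj" unfolding has_induced_def by blast
    then show False using assms(2) by blast
  qed
qed

definition k1k2free :: "'a set \<Rightarrow> ('a \<Rightarrow> 'a \<Rightarrow> bool) \<Rightarrow> bool" where
  "k1k2free W E \<longleftrightarrow> (\<forall>a\<in>W. \<forall>b\<in>W. \<forall>c\<in>W. E b c \<longrightarrow> a = b \<or> a = c \<or> E a b \<or> E a c)"

lemma k1k2free_sub: "k1k2free W E \<Longrightarrow> U \<subseteq> W \<Longrightarrow> k1k2free U E"
  unfolding k1k2free_def by (meson subsetD)

lemma clb_insert:
  assumes "finite W" "sg W E" "clb W E (Suc k)" "a \<in> W" "R \<subseteq> {b\<in>W. E a b}"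
  shows "clb R E k"
  unfolding clb_def
proof (intro allI impI)
  fix K assume K: "K \<subseteq> R" "\<forall>x\<in>K. \<forall>y\<in>K. x \<noteq> y \<longrightarrow> E x y"
  have KW: "\<And>x. x \<in> K \<Longrightarrow> x \<in> W \<and> E a x" using K(1) assms(5) by blast
  have irr: "\<not> E a a" using assms(2,4) unfolding sg_def by blast
  have aK: "a \<notin> K" using KW irr by blast
  have fK: "finite K" using K(1) assms(5) finite_subset[OF _ assms(1)] by blast
  have "insert a K \<subseteq> W" using KW assms(4) by blast
  moreover have "\<forall>x\<in>insert a K. \<forall>y\<in>insert a K. x \<noteq> y \<longrightarrow> E x y"
  proof (intro ballI impI)
    fix x y assume xy: "x \<in> insert a K" "y \<in> insert a K" "x \<noteq> y"
    show "E x y"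
    proof (cases "x = a")
      case True then show ?thesis using xy KW by blast
    next
      case False
      then have x: "x \<in> K" using xy by blast
      show ?thesis
      proof (cases "y = a")
        case True
        have "E a x" using KW x by blast
        then show ?thesis using True assms(2,4) KW x unfolding sg_def by blast
      next
        case False then show ?thesis using x xy K(2) by blast
      qed
    qed
  qed
  ultimately have "card (insert a K) \<le> Suc k" using assms(3) unfolding clb_def by blast
  then show "card K \<le> k" using aK fK by simp
qed

lemma clb_zero: assumes "clb W E 0" shows "W = {}"
proof (rule ccontr)
  assume "W \<noteq> {}"
  then obtain x where "x \<in> W" by blast
  then have "card {x} \<le> 0" using assms unfolding clb_def by auto
  then show False by simp
qed

lemma L1: "finite W \<Longrightarrow> sg W E \<Longrightarrow> k1k2free W E \<Longrightarrow> clb W E k \<Longrightarrow> col W E k"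
proof (induction k arbitrary: W)
  case 0
  then have "W = {}" using clb_zero by blast
  then show ?case using col_empty by simp
next
  case (Suc k)
  show ?case
  proof (cases "W = {}")
    case True then show ?thesis using col_empty by simp
  next
    case False
    then obtain a where a: "a \<in> W" by blast
    define A where "A = {b\<in>W. \<not> E a b}"
    define R where "R = {b\<in>W. E a b}"
    have RW: "R \<subseteq> W" unfolding R_def by auto
    have "col R E k"
    proof (rule Suc.IH)
      show "finite R" using RW Suc.prems(1) by (rule finite_subset)
      show "sg R E" using Suc.prems(2) RW by (rule sg_sub)
      show "k1k2free R E" using Suc.prems(3) RW by (rule k1k2free_sub)
      show "clb R E k" using Suc.prems(1,2,4) a by (rule clb_insert) (simp add: R_def)
    qed
    moreover have "col A E 1"
    proof (rule col_indep)
      show "\<forall>x\<in>A. \<forall>y\<in>A. \<not> E x y"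
      proof (intro ballI)
        fix x y assume "x \<in> A" "y \<in> A"
        then have x: "x \<in> W" "\<not> E a x" and y: "y \<in> W" "\<not> E a y" unfolding A_def by auto
        show "\<not> E x y"
        proof
          assume e: "E x y"
          have "a = x \<or> a = y \<or> E a x \<or> E a y"
            using Suc.prems(3) a x y e unfolding k1k2free_def by blast
          moreover have "E y x" using Suc.prems(2) x y e unfolding sg_def by blast
          ultimately show False using x y e by auto
        qed
      qed
    qed simp
    ultimately have "col (R \<union> A) E (k + 1)" by (rule col_sum)
    moreover have "R \<union> A = W" unfolding R_def A_def by auto
    ultimately show ?thesis by simp
  qed
qed

lemma symE: "sg W E \<Longrightarrow> x \<in> W \<Longrightarrow> y \<in> W \<Longrightarrow> E x y \<Longrightarrow> E y x"
  unfolding sg_def by blast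
lemma irrE: "sg W E \<Longrightarrow> x \<in> W \<Longrightarrow> \<not> E x x"
  unfolding sg_def by blast
lemma forkE: assumes "forkfree W E" "x0 \<in> W" "x1 \<in> W" "x2 \<in> W" "x3 \<in> W" "x4 \<in> W"
  "distinct [x0,x1,x2,x3,x4]" "E x0 x1" "E x0 x2" "E x0 x3" "E x3 x4" shows
  "E x1 x2 \<or> E x1 x3 \<or> E x1 x4 \<or> E x2 x3 \<or> E x2 x4 \<or> E x0 x4"
  using assms(1)[unfolded forkfree_def, rule_format, OF assms(2-6)] assms(7-11) by blast
lemma pawE: assumes "pawfree W E" "a \<in> W" "b \<in> W" "c \<in> W" "d \<in> W"
  "E a b" "E a c" "E a d" "E b c" shows "E b d \<or> E c d"
  using assms(1)[unfolded pawfree_def, rule_format, OF assms(2-5)] assms(6-9) by blast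

definition trifree :: "'a set \<Rightarrow> ('a \<Rightarrow> 'a \<Rightarrow> bool) \<Rightarrow> bool" where
  "trifree W E \<longleftrightarrow> (\<forall>a\<in>W. \<forall>b\<in>W. \<forall>c\<in>W. E a b \<longrightarrow> E a c \<longrightarrow> \<not> E b c)"

lemma triE: assumes "trifree W E" "a \<in> W" "b \<in> W" "c \<in> W" "E a b" "E a c" shows "\<not> E b c"
  using assms(1)[unfolded trifree_def, rule_format, OF assms(2-4)] assms(5,6) by blast
lemma trifree_sub: "trifree W E \<Longrightarrow> U \<subseteq> W \<Longrightarrow> trifree U E"
  unfolding trifree_def by (meson subsetD)

lemma three_elems: assumes "finite N" "3 \<le> card N"
  obtains p q r where "p \<in> N" "q \<in> N" "r \<in> N" "p \<noteq> q" "p \<noteq> r" "q \<noteq> r"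
proof -
  have "N \<noteq> {}" using assms by auto
  then obtain p where p: "p \<in> N" by blast
  have c2: "card (N - {p}) \<ge> 2" using assms p by simp
  have "N - {p} \<noteq> {}"
  proof
    assume h: "N - {p} = {}"
    have "card (N - {p}) = 0" by (simp only: h card.empty)
    then show False using c2 by simp
  qed
  then obtain q where q: "q \<in> N - {p}" by blast
  have c1: "card (N - {p} - {q}) \<ge> 1" using assms p q by simp
  have "N - {p} - {q} \<noteq> {}"
  proof
    assume h: "N - {p} - {q} = {}"
    have "card (N - {p} - {q}) = 0" by (simp only: h card.empty)
    then show False using c1 by simp
  qed
  then obtain r where r: "r \<in> N - {p} - {q}" by blast
  show ?thesis using that p q r by blast
qed

lemma col_split:
  assumes "C \<subseteq> W" "col C E k" "col (W - C) E k" "sg W E"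
    and "\<And>x s. x \<in> C \<Longrightarrow> s \<in> W - C \<Longrightarrow> \<not> E x s"
  shows "col W E k"
proof -
  have "\<forall>x\<in>C. \<forall>y\<in>W - C. \<not> E x y \<and> \<not> E y x"
  proof (intro ballI conjI)
    fix x y assume xy: "x \<in> C" "y \<in> W - C"
    show "\<not> E x y" using assms(5) xy by blast
    show "\<not> E y x"
    proof
      assume "E y x"
      then have "E x y" using symE[OF assms(4)] xy assms(1) by blast
      then show False using assms(5) xy by blast
    qed
  qed
  then have "col (C \<union> (W - C)) E k" using col_sep assms(2,3) by blast
  moreover have "C \<union> (W - C) = W" using assms(1) by blast
  ultimately show ?thesis by simp
qed

lemma L2: "finite W \<Longrightarrow> sg W E \<Longrightarrow> trifree W E \<Longrightarrow> forkfree W E \<Longrightarrow> col W E 3"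
proof (induction "card W" arbitrary: W rule: less_induct)
  case less
  note fin = less.prems(1) and sg = less.prems(2) and tf = less.prems(3) and ff = less.prems(4)
  show ?case
  proof (cases "W = {}")
    case True then show ?thesis using col_empty by simp
  next
    case False
    then obtain u where u: "u \<in> W" by blast
    define N where "N = {y\<in>W. E u y}"
    have finN: "finite N" using fin unfolding N_def by simp
    show ?thesis
    proof (cases "card N < 3")
      case True
      have "col (W - {u}) E 3"
      proof (rule less.hyps)
        show "card (W - {u}) < card W" by (rule card_Diff1_less[OF fin u])
        show "finite (W - {u})" using fin by simp
        show "sg (W - {u}) E" using sg by (rule sg_sub) blast
        show "trifree (W - {u}) E" using tf by (rule trifree_sub) blast
        show "forkfree (W - {u}) E" using ff by (rule forkfree_sub) blast
      qed
      then show ?thesis using col_extend[OF fin sg u] True unfolding N_def by blast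
    next
      case False
      then have c3: "3 \<le> card N" by simp
      obtain p q r where pqr: "p \<in> N" "q \<in> N" "r \<in> N" "p \<noteq> q" "p \<noteq> r" "q \<noteq> r"
        by (rule three_elems[OF finN c3])
      define N2 where "N2 = {y\<in>W. y \<noteq> u \<and> y \<notin> N \<and> (\<exists>a\<in>N. E a y)}"
      define N3 where "N3 = {z\<in>W. z \<noteq> u \<and> z \<notin> N \<and> z \<notin> N2 \<and> (\<exists>y\<in>N2. E y z)}"
      define C where "C = {u} \<union> N \<union> N2 \<union> N3"
      have NW: "N \<subseteq> W" unfolding N_def by blast
      have N2W: "N2 \<subseteq> W" unfolding N2_def by blast
      have N3W: "N3 \<subseteq> W" unfolding N3_def by blast
      have uN: "u \<notin> N" using irrE[OF sg u] unfolding N_def by blast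
      have Nind: "\<not> E a b" if "a \<in> N" "b \<in> N" for a b
        using triE[OF tf u, of a b] that NW unfolding N_def by blast
      have F1: "E y b \<or> E y c" if y: "y \<in> N2" and bc: "b \<in> N" "c \<in> N" "b \<noteq> c" for y b c
      proof -
        obtain a where a: "a \<in> N" "E a y" using y unfolding N2_def by blast
        have yW: "y \<in> W" "y \<noteq> u" "y \<notin> N" using y unfolding N2_def by auto
        have aW: "a \<in> W" "b \<in> W" "c \<in> W" using a bc NW by auto
        show ?thesis
        proof (cases "a = b \<or> a = c")
          case True
          then show ?thesis using symE[OF sg aW(1) yW(1) a(2)] by blast
        next
          case False
          have d: "distinct [u,b,c,a,y]" using False bc a uN yW by auto
          have "E b c \<or> E b a \<or> E b y \<or> E c a \<or> E c y \<or> E u y"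
            by (rule forkE[OF ff u aW(2,3,1) yW(1) d]) (use bc a in \<open>auto simp: N_def\<close>)
          moreover have "\<not> E b c" "\<not> E b a" "\<not> E c a" using Nind bc a by auto
          moreover have "\<not> E u y" using yW unfolding N_def by blast
          ultimately have "E b y \<or> E c y" by blast
          then show ?thesis using symE[OF sg aW(2) yW(1)] symE[OF sg aW(3) yW(1)] by blast
        qed
      qed
      have F2: "\<not> E y y'" if "y \<in> N2" "y' \<in> N2" for y y'
      proof
        assume e: "E y y'"
        have "\<exists>s\<in>{p,q,r}. E y s \<and> E y' s"
          using F1[OF that(1) pqr(1,2,4)] F1[OF that(1) pqr(1,3,5)] F1[OF that(1) pqr(2,3,6)]
            F1[OF that(2) pqr(1,2,4)] F1[OF that(2) pqr(1,3,5)] F1[OF that(2) pqr(2,3,6)]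
          by blast
        then obtain s where s: "s \<in> N" "E y s" "E y' s" using pqr by blast
        have W: "s \<in> W" "y \<in> W" "y' \<in> W" using s(1) that NW N2W by auto
        have "E s y" "E s y'" using symE[OF sg W(2,1) s(2)] symE[OF sg W(3,1) s(3)] by auto
        then show False using triE[OF tf W] e by blast
      qed
      have two: "\<exists>a\<in>N. \<exists>b\<in>N. a \<noteq> b \<and> E y a \<and> E y b" if "y \<in> N2" for y
        using F1[OF that pqr(1,2,4)] F1[OF that pqr(1,3,5)] F1[OF that pqr(2,3,6)] pqr by blast
      have F3: "w \<in> N2" if z: "z \<in> N3" and w: "w \<in> W" "E z w" for z w
      proof (rule ccontr)
        assume wN2: "w \<notin> N2"
        obtain y where y: "y \<in> N2" "E y z" using z unfolding N3_def by blast
        obtain a b where ab: "a \<in> N" "b \<in> N" "a \<noteq> b" "E y a" "E y b" using two[OF y(1)] by blast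
        have zW: "z \<in> W" "z \<noteq> u" "z \<notin> N" "z \<notin> N2" using z unfolding N3_def by auto
        have yW: "y \<in> W" "y \<noteq> u" "y \<notin> N" using y unfolding N2_def by auto
        have abW: "a \<in> W" "b \<in> W" using ab NW by auto
        have naz: "\<not> E a z" using ab zW unfolding N2_def by blast
        have nbz: "\<not> E b z" using ab zW unfolding N2_def by blast
        have wa: "w \<noteq> a" using naz symE[OF sg zW(1) w] by blast
        have wb: "w \<noteq> b" using nbz symE[OF sg zW(1) w] by blast
        have wz: "w \<noteq> z" using irrE[OF sg zW(1)] w by blast
        have wy: "w \<noteq> y" using y wN2 by blast
        have yz: "y \<noteq> z" using irrE[OF sg yW(1)] y(2) by blast
        have d: "distinct [y,a,b,z,w]" using wa wb wz wy yz ab zW yW by auto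
        have "E a b \<or> E a z \<or> E a w \<or> E b z \<or> E b w \<or> E y w"
          by (rule forkE[OF ff yW(1) abW zW(1) w(1) d ab(4,5) y(2) w(2)])
        moreover have "\<not> E a b" using Nind ab by blast
        moreover have "\<not> E y w" using triE[OF tf yW(1) zW(1) w(1)] y(2) w(2) by blast
        moreover have "\<not> E a w"
        proof
          assume aw: "E a w"
          have wu: "w \<noteq> u" using zW symE[OF sg zW(1) w] unfolding N_def by blast
          have wN: "w \<notin> N"
          proof
            assume "w \<in> N"
            then have "z \<in> N2" using symE[OF sg zW(1) w] zW unfolding N2_def by blast
            then show False using zW by blast
          qed
          have "w \<in> N2" using w(1) wu wN aw ab(1) unfolding N2_def by blast
          then show False using wN2 by blast
        qed
        moreover have "\<not> E b w"
        proof
          assume aw: "E b w"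
          have wu: "w \<noteq> u" using zW symE[OF sg zW(1) w] unfolding N_def by blast
          have wN: "w \<notin> N"
          proof
            assume "w \<in> N"
            then have "z \<in> N2" using symE[OF sg zW(1) w] zW unfolding N2_def by blast
            then show False using zW by blast
          qed
          have "w \<in> N2" using w(1) wu wN aw ab(2) unfolding N2_def by blast
          then show False using wN2 by blast
        qed
        ultimately show False using naz nbz by blast
      qed
      have CW: "C \<subseteq> W" unfolding C_def using u NW N2W N3W by blast
      have clos: "\<not> E x s" if xC: "x \<in> C" and sC: "s \<in> W - C" for x s
      proof
        assume e: "E x s"
        have s: "s \<in> W" "s \<noteq> u" "s \<notin> N" "s \<notin> N2" "s \<notin> N3" using sC unfolding C_def by auto
        consider "x = u" | "x \<in> N" | "x \<in> N2" | "x \<in> N3" using xC unfolding C_def by blast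
        then show False
        proof cases
          case 1 then show False using e s unfolding N_def by blast
        next
          case 2 then show False using e s unfolding N2_def by blast
        next
          case 3 then show False using e s unfolding N3_def by blast
        next
          case 4 then show False using F3[OF 4 s(1) e] s by blast
        qed
      qed
      have colC: "col C E 3"
      proof -
        define c where "c x = (if x = u \<or> x \<in> N2 then 0 else (1::nat))" for x
        have "proper_colouring C E 3 c"
          unfolding proper_colouring_def
        proof (intro conjI ballI impI)
          show "c ` C \<subseteq> {..<3}" unfolding c_def by auto
        next
          fix x y assume xy: "x \<in> C" "y \<in> C" "E x y"
          have xW: "x \<in> W" "y \<in> W" using xy CW by auto
          have yx: "E y x" using symE[OF sg xW xy(3)] .
          show "c x \<noteq> c y"
          proof (cases "x = u \<or> x \<in> N2")
            case True
            show ?thesis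
            proof (cases "y = u \<or> y \<in> N2")
              case True2: True
              have False
              proof (cases "x = u")
                case True3: True
                then have "y \<noteq> u" using irrE[OF sg xW(2)] xy(3) by blast
                then have "y \<in> N2" using True2 by blast
                moreover have "y \<in> N" using True3 xy(3) xW unfolding N_def by blast
                ultimately show False unfolding N2_def by blast
              next
                case False3: False
                then have xN2: "x \<in> N2" using True by blast
                show False
                proof (cases "y = u")
                  case True4: True
                  then have "x \<in> N" using yx xW unfolding N_def by blast
                  then show False using xN2 unfolding N2_def by blast
                next
                  case False4: False
                  then have "y \<in> N2" using True2 by blast
                  then show False using F2 xN2 xy(3) by blast
                qed
              qed
              then show ?thesis by blast
            next
              case False2: False
              then show ?thesis using True unfolding c_def by auto
            qed
          next
            case False
            then have xN: "x \<in> N \<or> x \<in> N3" using xy(1) unfolding C_def by blast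
            show ?thesis
            proof (cases "y = u \<or> y \<in> N2")
              case True
              then show ?thesis using False unfolding c_def by auto
            next
              case False2: False
              then have yN: "y \<in> N \<or> y \<in> N3" using xy(2) unfolding C_def by blast
              have False
              proof (cases "x \<in> N")
                case True
                show False
                proof (cases "y \<in> N")
                  case True2: True
                  then show False using Nind True xy(3) by blast
                next
                  case False3: False
                  then have "y \<in> N3" using yN by blast
                  then have "y \<in> N2" "y \<notin> N2" using True xy(3) xW unfolding N3_def N2_def by blast+
                  then show False by blast
                qed
              next
                case False3: False
                then have xN3: "x \<in> N3" using xN by blast
                have "y \<in> N2" using F3[OF xN3 xW(2) xy(3)] .
                then show False using False2 by blast
              qed
              then show ?thesis by blast
            qed
          qed
        qed
        then show ?thesis unfolding col_def by blast
      qed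
      have "col (W - C) E 3"
      proof (rule less.hyps)
        show "card (W - C) < card W" using fin u unfolding C_def by (intro psubset_card_mono) auto
        show "finite (W - C)" using fin by simp
        show "sg (W - C) E" using sg by (rule sg_sub) blast
        show "trifree (W - C) E" using tf by (rule trifree_sub) blast
        show "forkfree (W - C) E" using ff by (rule forkfree_sub) blast
      qed
      then show ?thesis using col_split[OF CW colC _ sg clos] by blast
    qed
  qed
qed

lemma L3a: "finite W \<Longrightarrow> sg W E \<Longrightarrow> pawfree W E \<Longrightarrow> clb W E w \<Longrightarrow>
  (\<forall>x\<in>W. \<exists>p\<in>W. \<exists>q\<in>W. E x p \<and> E x q \<and> E p q) \<Longrightarrow> col W E w"
proof (induction "card W" arbitrary: W rule: less_induct)
  case less
  note fin = less.prems(1) and sg = less.prems(2) and pf = less.prems(3) and cb = less.prems(4)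
    and tri = less.prems(5)
  show ?case
  proof (cases "W = {}")
    case True then show ?thesis using col_empty by simp
  next
    case False
    then obtain u where u: "u \<in> W" by blast
    obtain d e where de: "d \<in> W" "e \<in> W" "E u d" "E u e" "E d e" using tri u by blast
    have "card {u} \<le> w" using cb u unfolding clb_def by blast
    then obtain w' where w': "w = Suc w'" by (cases w) auto
    define D where "D = {y\<in>W. E u y}"
    define T where "T = {t\<in>W. t \<noteq> u \<and> t \<notin> D \<and> (\<exists>x\<in>D. E x t)}"
    define C where "C = {u} \<union> D \<union> T"
    have DW: "D \<subseteq> W" unfolding D_def by blast
    have TW: "T \<subseteq> W" unfolding T_def by blast
    have CW: "C \<subseteq> W" unfolding C_def using DW TW u by blast
    have dD: "d \<in> D" "e \<in> D" using de unfolding D_def by auto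
    have B: "\<exists>e'\<in>D. E x e'" if x: "x \<in> D" for x
    proof -
      have xW: "x \<in> W" "E u x" using x unfolding D_def by auto
      show ?thesis
      proof (cases "x = d \<or> x = e")
        case True
        then show ?thesis using dD de(5) symE[OF sg de(1,2) de(5)] by blast
      next
        case False
        have "E d x \<or> E e x" by (rule pawE[OF pf u de(1,2) xW(1) de(3,4) xW(2) de(5)])
        then show ?thesis using dD symE[OF sg de(1) xW(1)] symE[OF sg de(2) xW(1)] by blast
      qed
    qed
    have A: "E y t" if "x \<in> D" "y \<in> D" "E x t" "E x y" "t \<in> T" for x y t
    proof -
      have W: "x \<in> W" "y \<in> W" "t \<in> W" "E u x" "E u y" "t \<notin> D" using that unfolding D_def T_def by auto
      have "E u t \<or> E y t"
        by (rule pawE[OF pf W(1) u W(2) W(3) symE[OF sg u W(1) W(4)] that(4) that(3) W(5)])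
      moreover have "\<not> E u t" using W(3,6) unfolding D_def by blast
      ultimately show ?thesis by blast
    qed
    have Tall: "E y t" if t: "t \<in> T" and y: "y \<in> D" for t y
    proof -
      obtain x where x: "x \<in> D" "E x t" using t unfolding T_def by blast
      obtain e' where e': "e' \<in> D" "E x e'" using B[OF x(1)] by blast
      have et: "E e' t" using A[OF x(1) e'(1) x(2) e'(2) t] .
      show ?thesis
      proof (cases "y = x")
        case True then show ?thesis using x by blast
      next
        case False
        show ?thesis
        proof (cases "E x y")
          case True then show ?thesis using A[OF x(1) y x(2) True t] by blast
        next
          case False2: False
          show ?thesis
          proof (cases "E e' y")
            case True then show ?thesis using A[OF e'(1) y et True t] by blast
          next
            case False3: False
            have W: "x \<in> W" "e' \<in> W" "y \<in> W" using x e' y DW by auto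
            have "E x y \<or> E e' y"
              by (rule pawE[OF pf u W(1,2,3)]) (use x e' y in \<open>auto simp: D_def\<close>)
            then show ?thesis using False2 False3 by blast
          qed
        qed
      qed
    qed
    have Tind: "\<not> E t t'" if "t \<in> T" "t' \<in> T" for t t'
    proof
      assume tt: "E t t'"
      have W: "t \<in> W" "t' \<in> W" "t \<notin> D" "t' \<notin> D" using that unfolding T_def by auto
      have "E t u \<or> E t' u"
        by (rule pawE[OF pf de(1) W(1,2) u Tall[OF that(1) dD(1)] Tall[OF that(2) dD(1)]
              symE[OF sg u de(1) de(3)] tt])
      then show False using W symE[OF sg W(1) u] symE[OF sg W(2) u] unfolding D_def by blast
    qed
    have clos: "\<not> E x s" if xC: "x \<in> C" and sC: "s \<in> W - C" for x s
    proof
      assume es: "E x s"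
      have s: "s \<in> W" "s \<noteq> u" "s \<notin> D" "s \<notin> T" using sC unfolding C_def by auto
      consider "x = u" | "x \<in> D" | "x \<in> T" using xC unfolding C_def by blast
      then show False
      proof cases
        case 1 then show False using es s unfolding D_def by blast
      next
        case 2 then show False using es s unfolding T_def by blast
      next
        case 3
        have xW: "x \<in> W" using 3 TW by blast
        have "E d s \<or> E e s"
          by (rule pawE[OF pf xW de(1,2) s(1) symE[OF sg de(1) xW Tall[OF 3 dD(1)]]
                symE[OF sg de(2) xW Tall[OF 3 dD(2)]] es de(5)])
        then have "s \<in> T" using s dD unfolding T_def by blast
        then show False using s by blast
      qed
    qed
    have colC: "col C E w"
    proof -
      have "col D E w'"
      proof (rule L1)
        show "finite D" using fin DW finite_subset by blast
        show "sg D E" using sg DW by (rule sg_sub)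
        show "k1k2free D E" unfolding k1k2free_def
        proof (intro ballI impI)
          fix a b c assume abc: "a \<in> D" "b \<in> D" "c \<in> D" "E b c"
          have W: "a \<in> W" "b \<in> W" "c \<in> W" using abc DW by auto
          have "E b a \<or> E c a"
            by (rule pawE[OF pf u W(2,3,1)]) (use abc in \<open>auto simp: D_def\<close>)
          then show "a = b \<or> a = c \<or> E a b \<or> E a c" using symE[OF sg W(2,1)] symE[OF sg W(3,1)] by blast
        qed
        show "clb D E w'" using fin sg cb[unfolded w'] u by (rule clb_insert) (simp add: D_def)
      qed
      moreover have "col ({u} \<union> T) E 1"
      proof (rule col_indep)
        show "\<forall>x\<in>{u} \<union> T. \<forall>y\<in>{u} \<union> T. \<not> E x y"
        proof (intro ballI)
          fix x y assume xy: "x \<in> {u} \<union> T" "y \<in> {u} \<union> T"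
          show "\<not> E x y"
          proof (cases "x = u")
            case True
            show ?thesis
            proof (cases "y = u")
              case True2: True then show ?thesis using True irrE[OF sg u] by simp
            next
              case False2: False
              then have "y \<in> T" using xy by blast
              then show ?thesis using True unfolding T_def D_def by blast
            qed
          next
            case False
            then have xT: "x \<in> T" using xy by blast
            show ?thesis
            proof (cases "y = u")
              case True
              have "\<not> E u x" using xT unfolding T_def D_def by blast
              then show ?thesis using True symE[OF sg _ u, of x] xT TW by blast
            next
              case False2: False
              then have "y \<in> T" using xy by blast
              then show ?thesis using Tind xT by blast
            qed
          qed
        qed
      qed simp
      ultimately have "col (D \<union> ({u} \<union> T)) E (w' + 1)" by (rule col_sum)
      moreover have "D \<union> ({u} \<union> T) = C" unfolding C_def by blast
      ultimately show ?thesis using w' by simp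
    qed
    have "col (W - C) E w"
    proof (rule less.hyps)
      show "card (W - C) < card W" using fin u unfolding C_def by (intro psubset_card_mono) auto
      show "finite (W - C)" using fin by simp
      show "sg (W - C) E" using sg by (rule sg_sub) blast
      show "pawfree (W - C) E" using pf by (rule pawfree_sub) blast
      show "clb (W - C) E w" using cb by (rule clb_sub) blast
      show "\<forall>x\<in>W - C. \<exists>p\<in>W - C. \<exists>q\<in>W - C. E x p \<and> E x q \<and> E p q"
      proof
        fix x assume x: "x \<in> W - C"
        then obtain p q where pq: "p \<in> W" "q \<in> W" "E x p" "E x q" "E p q" using tri by blast
        have "p \<notin> C" using clos[of p x] x symE[OF sg _ pq(1) pq(3)] by blast
        moreover have "q \<notin> C" using clos[of q x] x symE[OF sg _ pq(2) pq(4)] by blast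
        ultimately show "\<exists>p\<in>W - C. \<exists>q\<in>W - C. E x p \<and> E x q \<and> E p q" using pq by blast
      qed
    qed
    then show ?thesis using col_split[OF CW colC _ sg clos] by blast
  qed
qed

lemma L3: assumes fin: "finite W" and sg: "sg W E" and pf: "pawfree W E" and ff: "forkfree W E"
  and cb: "clb W E w" and w3: "3 \<le> w"
  shows "col W E w"
proof -
  define T0 where "T0 = {x\<in>W. \<not> (\<exists>p\<in>W. \<exists>q\<in>W. E x p \<and> E x q \<and> E p q)}"
  have T0W: "T0 \<subseteq> W" unfolding T0_def by blast
  have clos: "\<not> E x s" if x: "x \<in> T0" and s: "s \<in> W - T0" for x s
  proof
    assume xs: "E x s"
    have xW: "x \<in> W" using x T0W by blast
    obtain p q where pq: "p \<in> W" "q \<in> W" "E s p" "E s q" "E p q" using s unfolding T0_def by blast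
    have sW: "s \<in> W" using s by blast
    have sx: "E s x" using symE[OF sg xW sW xs] .
    have "E p x \<or> E q x" by (rule pawE[OF pf sW pq(1,2) xW pq(3,4) sx pq(5)])
    then show False
    proof
      assume "E p x"
      then have "E x p" using symE[OF sg pq(1) xW] by blast
      then show False using x xs pq(1,3) sW unfolding T0_def by blast
    next
      assume "E q x"
      then have "E x q" using symE[OF sg pq(2) xW] by blast
      moreover have "E s q" using pq by blast
      ultimately show False using x xs pq(2) sW unfolding T0_def by blast
    qed
  qed
  have c0: "col T0 E w"
  proof -
    have "col T0 E 3"
    proof (rule L2)
      show "finite T0" using fin T0W finite_subset by blast
      show "sg T0 E" using sg T0W by (rule sg_sub)
      show "forkfree T0 E" using ff T0W by (rule forkfree_sub)
      show "trifree T0 E" unfolding trifree_def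
      proof (intro ballI impI notI)
        fix a b c assume "a \<in> T0" "b \<in> T0" "c \<in> T0" "E a b" "E a c" "E b c"
        then show False unfolding T0_def by blast
      qed
    qed
    then show ?thesis using w3 by (rule col_mono)
  qed
  have c1: "col (W - T0) E w"
  proof (rule L3a)
    show "finite (W - T0)" using fin by simp
    show "sg (W - T0) E" using sg by (rule sg_sub) blast
    show "pawfree (W - T0) E" using pf by (rule pawfree_sub) blast
    show "clb (W - T0) E w" using cb by (rule clb_sub) blast
    show "\<forall>x\<in>W - T0. \<exists>p\<in>W - T0. \<exists>q\<in>W - T0. E x p \<and> E x q \<and> E p q"
    proof
      fix x assume x: "x \<in> W - T0"
      then obtain p q where pq: "p \<in> W" "q \<in> W" "E x p" "E x q" "E p q" unfolding T0_def by blast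
      have xW: "x \<in> W" using x by blast
      have "p \<notin> T0"
      proof
        assume "p \<in> T0"
        moreover have "E p x" "E p q" "E x q" using symE[OF sg xW pq(1) pq(3)] pq by auto
        ultimately show False using xW pq(2) unfolding T0_def by blast
      qed
      moreover have "q \<notin> T0"
      proof
        assume "q \<in> T0"
        moreover have "E q x" "E q p" "E x p" using symE[OF sg xW pq(2) pq(4)] symE[OF sg pq(1,2) pq(5)] pq by auto
        ultimately show False using xW pq(1) unfolding T0_def by blast
      qed
      ultimately show "\<exists>p\<in>W - T0. \<exists>q\<in>W - T0. E x p \<and> E x q \<and> E p q" using pq by blast
    qed
  qed
  show ?thesis using col_split[OF T0W c0 c1 sg clos] .
qed

lemma nonnb_sub: "U \<subseteq> W \<Longrightarrow> nonnb U E v \<subseteq> nonnb W E v"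
  unfolding nonnb_def by blast

lemma main: "finite W \<Longrightarrow> sg W E \<Longrightarrow> forkfree W E \<Longrightarrow> (\<forall>v\<in>W. pawfree (nonnb W E v) E) \<Longrightarrow>
  clb W E w \<Longrightarrow> col W E (Suc w choose 2)"
proof (induction w arbitrary: W)
  case 0
  then have "W = {}" using clb_zero by blast
  then show ?case using col_empty by simp
next
  case (Suc w)
  note fin = Suc.prems(1) and sg = Suc.prems(2) and ff = Suc.prems(3) and cd = Suc.prems(4)
    and cb = Suc.prems(5)
  consider "w = 0" | "w = 1" | "2 \<le> w" by linarith
  then show ?case
  proof cases
    case 1
    have "\<forall>x\<in>W. \<forall>y\<in>W. \<not> E x y"
    proof (intro ballI notI)
      fix x y assume xy: "x \<in> W" "y \<in> W" "E x y"
      have ne: "x \<noteq> y" using irrE[OF sg xy(1)] xy(3) by blast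
      have "\<forall>a\<in>{x,y}. \<forall>b\<in>{x,y}. a \<noteq> b \<longrightarrow> E a b" using xy symE[OF sg xy] by blast
      moreover have "{x,y} \<subseteq> W" using xy by blast
      ultimately have "card {x,y} \<le> Suc w" using cb[unfolded clb_def, rule_format, of "{x,y}"] by blast
      then show False using ne 1 by simp
    qed
    then show ?thesis using 1 by (intro col_indep) simp_all
  next
    case 2
    have "col W E 3"
    proof (rule L2[OF fin sg _ ff])
      show "trifree W E" unfolding trifree_def
      proof (intro ballI impI notI)
        fix a b c assume abc: "a \<in> W" "b \<in> W" "c \<in> W" "E a b" "E a c" "E b c"
        have ne: "a \<noteq> b" "a \<noteq> c" "b \<noteq> c" using irrE[OF sg] abc by blast+
        have "\<forall>x\<in>{a,b,c}. \<forall>y\<in>{a,b,c}. x \<noteq> y \<longrightarrow> E x y"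
          using abc symE[OF sg abc(1,2) abc(4)] symE[OF sg abc(1,3) abc(5)] symE[OF sg abc(2,3) abc(6)]
          by blast
        moreover have "{a,b,c} \<subseteq> W" using abc by blast
        ultimately have "card {a,b,c} \<le> Suc w" using cb[unfolded clb_def, rule_format, of "{a,b,c}"] by blast
        then show False using ne 2 by simp
      qed
    qed
    then show ?thesis using 2 by (simp add: numeral_eq_Suc)
  next
    case 3
    show ?thesis
    proof (cases "W = {}")
      case True then show ?thesis using col_empty by simp
    next
      case False
      then obtain v where v: "v \<in> W" by blast
      define N where "N = {y\<in>W. E v y}"
      define M where "M = nonnb W E v"
      have NW: "N \<subseteq> W" unfolding N_def by blast
      have MW: "M \<subseteq> W" unfolding M_def nonnb_def by blast
      have cN: "col N E (Suc w choose 2)"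
      proof (rule Suc.IH)
        show "finite N" using fin NW finite_subset by blast
        show "sg N E" using sg NW by (rule sg_sub)
        show "forkfree N E" using ff NW by (rule forkfree_sub)
        show "\<forall>v\<in>N. pawfree (nonnb N E v) E"
        proof
          fix x assume "x \<in> N"
          then have "pawfree (nonnb W E x) E" using cd NW by blast
          then show "pawfree (nonnb N E x) E" by (rule pawfree_sub) (rule nonnb_sub[OF NW])
        qed
        show "clb N E w" using fin sg cb v by (rule clb_insert) (simp add: N_def)
      qed
      have cM: "col M E (Suc w)"
      proof (rule L3)
        show "finite M" using fin MW finite_subset by blast
        show "sg M E" using sg MW by (rule sg_sub)
        show "forkfree M E" using ff MW by (rule forkfree_sub)
        show "pawfree M E" using cd v unfolding M_def by blast
        show "clb M E (Suc w)" using cb MW by (rule clb_sub)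
        show "3 \<le> Suc w" using 3 by simp
      qed
      have cvM: "col ({v} \<union> M) E (Suc w)"
      proof (rule col_sep)
        show "col {v} E (Suc w)" using irrE[OF sg v] by (intro col_indep) auto
        show "col M E (Suc w)" by (rule cM)
        show "\<forall>x\<in>{v}. \<forall>y\<in>M. \<not> E x y \<and> \<not> E y x"
        proof (intro ballI conjI notI)
          fix x y assume "x \<in> {v}" "y \<in> M" "E x y"
          then show False unfolding M_def nonnb_def by blast
        next
          fix x y assume xy: "x \<in> {v}" "y \<in> M" "E y x"
          then have "E x y" using symE[OF sg] v MW by blast
          then show False using xy unfolding M_def nonnb_def by blast
        qed
      qed
      have "col (N \<union> ({v} \<union> M)) E ((Suc w choose 2) + Suc w)" using cN cvM by (rule col_sum)
      moreover have "N \<union> ({v} \<union> M) = W" unfolding N_def M_def nonnb_def using v by blast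
      moreover have "(Suc w choose 2) + Suc w = Suc (Suc w) choose 2"
        by (simp add: numeral_eq_Suc)
      ultimately show ?thesis by simp
    qed
  qed
qed

theorem corollary3p10:
  fixes V :: "'a set" and E :: "'a \<Rightarrow> 'a \<Rightarrow> bool"
  assumes "simple_graph V E"
    and "\<not> has_induced V E 5 fork_adj"
    and "\<not> has_induced V E 5 codart_adj"
  shows "chromatic_number V E \<le> (clique_number V E + 1) choose 2"
proof -
  have fin: "finite V" using assms(1) unfolding simple_graph_def by blast
  have sg: "sg V E" using assms(1) unfolding simple_graph_def sg_def by blast
  have ff: "forkfree V E" using fork_conv[OF sg assms(2)] .
  have cd: "\<forall>v\<in>V. pawfree (nonnb V E v) E" using codart_conv[OF sg assms(3)] by blast
  have cb: "clb V E (clique_number V E)" unfolding clb_def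
  proof (intro allI impI)
    fix K assume K: "K \<subseteq> V" "\<forall>x\<in>K. \<forall>y\<in>K. x \<noteq> y \<longrightarrow> E x y"
    have "is_clique V E K" using K unfolding is_clique_def by blast
    moreover have "finite {K. is_clique V E K}"
    proof (rule finite_subset)
      show "{K. is_clique V E K} \<subseteq> Pow V" unfolding is_clique_def by blast
      show "finite (Pow V)" using fin by simp
    qed
    ultimately show "card K \<le> clique_number V E" unfolding clique_number_def by (intro Max_ge) auto
  qed
  have "col V E (Suc (clique_number V E) choose 2)" using main[OF fin sg ff cd cb] .
  then have "\<exists>c. proper_colouring V E ((clique_number V E + 1) choose 2) c" unfolding col_def by simp
  then show ?thesis unfolding chromatic_number_def by (rule Least_le)
qed

end
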